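(* Let $n\ge 2$, $k \in \{1,\ldots,n\}$, $R >0$ and $h,h^* \in [0,\infty)$ satisfy \[ hR < k, \qquad h^* \ge \max \left\{ h, \frac{h}{k-hR}\right\}. \] Let $\xi \in C((0,\infty))$ be non-increasing, non-negative and such that $\int_{0^+} t^{k-1}\xi(t)\, \mathrm{d} t < \infty$, and let $\psi \in C^2((0,R))$ solve \[ \big(t^{k-1}e^{-h^*t}\psi'\big)' = e^{-h^*t} t^{k-1} \xi \quad \text{on } (0, R), \qquad \lim_{t \to 0}\big(t^{k-1}\psi'(t)\big) = 0. \] Fix $x_0 \in \mathbb{R}^n$, set $r(x)=|x-x_0|$ and $w(x) = \psi(r(x))$. Then \[ \mathcal{P}_k^-(\nabla^2 w) - h|\nabla w| \ge \frac{\xi(r)}{1+h^*R} \qquad \text{pointwise on } B_{R}(x_0) \setminus \{x_0\}. \] Moreover, provided that $\xi \in C([0,\infty))$, $w$ (extended at $x_0$ by continuity) belongs to $C^2(B_R(x_0))$ and the inequality holds pointwise on the entire ball $B_R(x_0)$.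
   Context: For a symmetric matrix $A$ with eigenvalues $\lambda_1(A)\le\dots\le\lambda_n(A)$, $\mathcal{P}_k^-(A)=\lambda_1(A)+\dots+\lambda_k(A)$; $\nabla^2 w$ is the Hessian of $w$. *)

theory Defs
  imports "HOL-Analysis.Analysis" "HOL-Computational_Algebra.Polynomial"
begin

definition charpoly :: "real^'n^'n \<Rightarrow> real poly" where
  "charpoly A = det (\<chi> i j. if i = j then [:- (A$i$j), 1:] else [:- (A$i$j):])"

definition eig_list :: "real^'n^'n \<Rightarrow> real list" where
  "eig_list A = (THE L. sorted L \<and> length L = CARD('n) \<and>
                    (\<forall>a. count_list L a = order a (charpoly A)))"

definition Pk_minus :: "nat \<Rightarrow> real^'n^'n \<Rightarrow> real" where
  "Pk_minus k A = sum_list (take k (eig_list A))"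

definition grad :: "(real^'n \<Rightarrow> real) \<Rightarrow> real^'n \<Rightarrow> real^'n" where
  "grad w x = (\<chi> i. frechet_derivative w (at x) (axis i 1))"

definition hess :: "(real^'n \<Rightarrow> real) \<Rightarrow> real^'n \<Rightarrow> real^'n^'n" where
  "hess w x = (\<chi> i j. frechet_derivative (\<lambda>y. grad w y $ j) (at x) (axis i 1))"

definition C2_on :: "(real^'n) set \<Rightarrow> (real^'n \<Rightarrow> real) \<Rightarrow> bool" where
  "C2_on S w \<longleftrightarrow> (\<forall>x\<in>S. w differentiable (at x)) \<and>
                  (\<forall>x\<in>S. (grad w) differentiable (at x)) \<and>
                  continuous_on S (hess w)"

end

theory Submission
  imports Defs
begin


lemma poly_det: "poly (det P) c = det (\<chi> i j. poly (P$i$j) c)"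
  unfolding det_def by (simp add: poly_sum poly_prod)

lemma charpoly_eval: "poly (charpoly M) c = det (mat c - M)"
  unfolding charpoly_def poly_det
  by (rule arg_cong[where f=det]) (auto simp: mat_def vec_eq_iff)

lemma det_rank1:
  fixes e :: "real^'n"
  assumes e: "norm e = 1"
  shows "det (mat c - (\<chi> i j. b * (if i = j then 1 else 0) + (a - b) * e$i * e$j))
         = (c - a) * (c - b) ^ (CARD('n) - 1)"
proof -
  obtain k0 :: 'n where True by blast
  obtain A where oA: "orthogonal_matrix A" and Ae: "A *v axis k0 1 = e"
    using orthogonal_matrix_exists_basis[OF e] by metis
  have col: "A$i$k0 = e$i" for i
    using Ae by (simp add: vec_eq_iff matrix_vector_mult_def axis_def if_distrib cong: if_cong)
  have orth: "(\<Sum>l\<in>UNIV. A$i$l * A$j$l) = (if i = j then 1 else 0)" for i j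
  proof -
    have "A ** transpose A = mat 1" using oA by (simp add: orthogonal_matrix_def)
    then have "(A ** transpose A)$i$j = mat 1 $i$j" by simp
    then show ?thesis by (simp add: matrix_matrix_mult_def transpose_def mat_def)
  qed
  define d where "d l = (c - b) + (if l = k0 then b - a else 0)" for l
  define D where "D = (\<chi> i j. if i = j then d i else (0::real))"
  have eq: "mat c - (\<chi> i j. b * (if i = j then 1 else 0) + (a - b) * e$i * e$j) = A ** D ** transpose A"
  proof -
    have "(A ** D ** transpose A)$i$j = (c - b) * (if i = j then 1 else 0) + (b - a) * e$i * e$j" for i j
    proof -
      have "(A ** D ** transpose A)$i$j = (\<Sum>l\<in>UNIV. A$i$l * d l * A$j$l)"
        by (simp add: matrix_matrix_mult_def transpose_def D_def if_distrib sum.If_cases cong: if_cong)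
      also have "\<dots> = (\<Sum>l\<in>UNIV. (c - b) * (A$i$l * A$j$l) + (if l = k0 then (b - a) * (A$i$l * A$j$l) else 0))"
        by (rule sum.cong) (auto simp: d_def algebra_simps)
      also have "\<dots> = (c - b) * (\<Sum>l\<in>UNIV. A$i$l * A$j$l) + (b - a) * (A$i$k0 * A$j$k0)"
        by (simp add: sum.distrib sum_distrib_left)
      finally show ?thesis by (simp add: orth col)
    qed
    then show ?thesis by (auto simp: vec_eq_iff mat_def algebra_simps)
  qed
  have "det (A ** D ** transpose A) = det A * det D * det A"
    by (simp add: det_mul)
  also have "det A * det A = 1" using det_orthogonal_matrix[OF oA] by auto
  then have "det A * det D * det A = det D" by (metis mult.commute mult.left_commute mult.right_neutral)
  also have "det D = (\<Prod>i\<in>UNIV. d i)"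
    by (subst det_diagonal) (auto simp: D_def)
  also have "\<dots> = d k0 * (\<Prod>i\<in>UNIV - {k0}. d i)"
    by (simp add: prod.remove)
  also have "(\<Prod>i\<in>UNIV - {k0}. d i) = (c - b) ^ (CARD('n) - 1)"
    by (simp add: d_def card_Diff_singleton)
  finally show ?thesis by (simp add: eq d_def)
qed

lemma charpoly_rank1:
  fixes e :: "real^'n"
  assumes e: "norm e = 1"
  shows "charpoly (\<chi> i j. b * (if i = j then 1 else 0) + (a - b) * e$i * e$j)
         = [:-a,1:] * [:-b,1:] ^ (CARD('n) - 1)"
proof (rule poly_eq_poly_eq_iff[THEN iffD1], rule ext)
  fix x
  show "poly (charpoly (\<chi> i j. b * (if i = j then 1 else 0) + (a - b) * e$i * e$j)) x =
    poly ([:-a,1:] * [:-b,1:] ^ (CARD('n) - 1)) x"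
    by (simp only: charpoly_eval det_rank1[OF e]) (simp add: poly_power algebra_simps)
qed

lemma eig_list_rank1:
  fixes e :: "real^'n"
  assumes e: "norm e = 1"
  shows "eig_list (\<chi> i j. b * (if i = j then 1 else 0) + (a - b) * e$i * e$j)
         = sort (a # replicate (CARD('n) - 1) b)"
proof -
  let ?p = "[:-a,1:] * [:-b,1:] ^ (CARD('n) - 1) :: real poly"
  let ?L = "sort (a # replicate (CARD('n) - 1) b)"
  have ordp: "order x ?p = count_list (a # replicate (CARD('n) - 1) b) x" for x
  proof -
    have n1: "[:-a,1:] \<noteq> (0::real poly)" by simp
    have n2: "[:-b,1:] ^ (CARD('n) - 1) \<noteq> (0::real poly)" by simp
    have nz: "?p \<noteq> 0" using n1 n2 no_zero_divisors by blast
    have o1: "order x [:-a,1:] = (if x = a then 1 else 0)"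
      using order_power_n_n[of a 1] by (auto intro!: order_0I)
    have o2: "order x ([:-b,1:] ^ (CARD('n) - 1)) = (if x = b then CARD('n) - 1 else 0)"
      using order_power_n_n[of b] by (auto intro!: order_0I simp: poly_power)
    have "count_list (replicate m b) x = (if x = b then m else 0)" for m
      by (induction m) auto
    then show ?thesis using order_mult[OF nz, of x] o1 o2 by auto
  qed
  have cl: "count_list (sort xs) x = count_list xs x" for xs :: "real list" and x
    by (metis count_mset mset_sort)
  have P: "sorted ?L \<and> length ?L = CARD('n) \<and> (\<forall>x. count_list ?L x = order x ?p)"
  proof (intro conjI allI)
    fix x show "count_list ?L x = order x ?p" by (simp only: ordp cl)
  qed (simp_all only: sorted_sort length_sort, simp)
  have U: "L = ?L" if "sorted L \<and> length L = CARD('n) \<and> (\<forall>x. count_list L x = order x ?p)" for L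
  proof -
    have c: "count_list L x = count_list ?L x" for x
    proof -
      have "count_list L x = order x ?p" using that by blast
      moreover have "count_list ?L x = order x ?p" using P by blast
      ultimately show ?thesis by (simp only:)
    qed
    have "mset L = mset ?L"
      unfolding multiset_eq_iff count_mset using c by blast
    then show ?thesis using that by (metis properties_for_sort sort_key_simps(2) mset_sort sorted_sort_id)
  qed
  show ?thesis unfolding eig_list_def charpoly_rank1[OF e]
    by (rule the_equality) (use P U in auto)
qed

lemma Pk_rank1:
  fixes e :: "real^'n"
  assumes e: "norm e = 1" and k: "1 \<le> k" "k \<le> CARD('n)"
  shows "Pk_minus k (\<chi> i j. b * (if i = j then 1 else 0) + (a - b) * e$i * e$j)
         \<ge> min (a + real (k - 1) * b) (real k * b)"
proof -
  define m where "m = CARD('n) - 1"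
  have kn: "k \<le> Suc m" using k m_def by simp
  show ?thesis
  proof (cases "a \<le> b")
    case True
    have "sort (a # replicate m b) = a # replicate m b"
      by (rule sorted_sort_id) (use True in \<open>auto simp: sorted_append\<close>)
    moreover have "take k (a # replicate m b) = a # replicate (k - 1) b"
      using k kn by (cases k) (auto)
    ultimately show ?thesis unfolding Pk_minus_def eig_list_rank1[OF e] m_def[symmetric]
      by (simp add: sum_list_replicate)
  next
    case False
    have "sort (a # replicate m b) = replicate m b @ [a]"
      by (rule properties_for_sort) (use False in \<open>auto simp: sorted_append\<close>)
    show ?thesis
    proof (cases "k \<le> m")
      case True
      have "take k (replicate m b @ [a]) = replicate k b" using True by simp
      then show ?thesis unfolding Pk_minus_def eig_list_rank1[OF e] m_def[symmetric]
        using \<open>sort (a # replicate m b) = replicate m b @ [a]\<close> by (simp add: sum_list_replicate)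
    next
      case F: False
      then have "k = Suc m" using kn by simp
      then have "take k (replicate m b @ [a]) = replicate m b @ [a]" by simp
      then show ?thesis unfolding Pk_minus_def eig_list_rank1[OF e] m_def[symmetric]
        using \<open>sort (a # replicate m b) = replicate m b @ [a]\<close> \<open>k = Suc m\<close>
        by (simp add: sum_list_replicate)
    qed
  qed
qed


lemma dN:
  fixes y x0 :: "real^'n"
  assumes "y \<noteq> x0"
  shows "((\<lambda>y. dist y x0) has_derivative (\<lambda>h. h \<bullet> sgn (y - x0))) (at y)"
proof -
  have "((\<lambda>y. norm (y - x0)) has_derivative (\<lambda>h. (h - 0) \<bullet> sgn (y - x0))) (at y)"
    by (rule has_derivative_compose[where g=norm, OF has_derivative_diff[OF has_derivative_ident has_derivative_const]])
       (use has_derivative_norm[of "y - x0"] assms in simp)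
  then show ?thesis by (simp add: dist_norm)
qed

lemma radial_grad:
  fixes f :: "real^'n \<Rightarrow> real" and x0 x :: "real^'n"
  assumes U: "open U" "x \<in> U" "x0 \<notin> U" and fU: "\<And>y. y \<in> U \<Longrightarrow> f y = \<psi> (dist y x0)"
    and d1: "\<And>y. y \<in> U \<Longrightarrow> (\<psi> has_real_derivative \<psi>' (dist y x0)) (at (dist y x0))"
  shows "(f has_derivative (\<lambda>h. \<psi>' (dist x x0) * (h \<bullet> sgn (x - x0)))) (at x)"
    and "grad f x = (\<psi>' (dist x x0) / dist x x0) *\<^sub>R (x - x0)"
proof -
  have xx0: "x \<noteq> x0" using U by auto
  have "((\<lambda>y. \<psi> (dist y x0)) has_derivative (\<lambda>h. \<psi>' (dist x x0) * (h \<bullet> sgn (x - x0)))) (at x)"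
    by (rule has_derivative_compose[OF dN[OF xx0] has_field_derivative_imp_has_derivative[OF d1[OF U(2)]]])
  then show D: "(f has_derivative (\<lambda>h. \<psi>' (dist x x0) * (h \<bullet> sgn (x - x0)))) (at x)"
    by (rule has_derivative_transform_within_open[OF _ U(1) U(2)]) (simp add: fU)
  have "grad f x $ i = ((\<psi>' (dist x x0) / dist x x0) *\<^sub>R (x - x0)) $ i" for i
    unfolding grad_def frechet_derivative_at[OF D, symmetric]
    by (simp add: sgn_div_norm inner_axis' dist_norm divide_inverse mult.commute mult.left_commute)
  then show "grad f x = (\<psi>' (dist x x0) / dist x x0) *\<^sub>R (x - x0)" by (simp add: vec_eq_iff)
qed

lemma radial_hess:
  fixes f :: "real^'n \<Rightarrow> real" and x0 x :: "real^'n"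
  assumes U: "open U" "x \<in> U" "x0 \<notin> U" and fU: "\<And>y. y \<in> U \<Longrightarrow> f y = \<psi> (dist y x0)"
    and d1: "\<And>y. y \<in> U \<Longrightarrow> (\<psi> has_real_derivative \<psi>' (dist y x0)) (at (dist y x0))"
    and d2: "\<And>y. y \<in> U \<Longrightarrow> (\<psi>' has_real_derivative \<psi>'' (dist y x0)) (at (dist y x0))"
  shows "f differentiable (at x)" "grad f differentiable (at x)"
    "hess f x = (\<chi> i j. (\<psi>' (dist x x0) / dist x x0) * (if i = j then 1 else 0)
        + (\<psi>'' (dist x x0) - \<psi>' (dist x x0) / dist x x0) * (sgn (x - x0))$i * (sgn (x - x0))$j)"
proof -
  have xx0: "x \<noteq> x0" using U by auto
  show "f differentiable (at x)" using radial_grad(1)[OF U fU d1] by (auto simp: differentiable_def)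
  have gU: "grad f y = (\<psi>' (dist y x0) / dist y x0) *\<^sub>R (y - x0)" if "y \<in> U" for y
    using radial_grad(2)[OF U(1) that U(3) fU d1] by blast
  define r where "r = dist x x0"
  have r0: "r > 0" using xx0 by (simp add: r_def)
  define q' where "q' = \<psi>'' r / r - \<psi>' r / r^2"
  have dq: "((\<lambda>t. \<psi>' t / t) has_real_derivative q') (at r)"
    using DERIV_divide[OF d2[OF U(2)] DERIV_ident] r0 unfolding r_def[symmetric] q'_def
    by (simp add: field_simps power2_eq_square)
  have dQ: "((\<lambda>y. \<psi>' (dist y x0) / dist y x0) has_derivative (\<lambda>h. q' * (h \<bullet> sgn (x - x0)))) (at x)"
    by (rule has_derivative_compose[OF dN[OF xx0], of "\<lambda>t. \<psi>' t / t", OF has_field_derivative_imp_has_derivative[OF dq[unfolded r_def]]])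
  have dV: "((\<lambda>y. (\<psi>' (dist y x0) / dist y x0) *\<^sub>R (y - x0)) has_derivative
     (\<lambda>h. (\<psi>' r / r) *\<^sub>R h + (q' * (h \<bullet> sgn (x - x0))) *\<^sub>R (x - x0))) (at x)"
    using has_derivative_scaleR[OF dQ has_derivative_diff[OF has_derivative_ident has_derivative_const]]
    by (simp add: r_def)
  have dG: "(grad f has_derivative
     (\<lambda>h. (\<psi>' r / r) *\<^sub>R h + (q' * (h \<bullet> sgn (x - x0))) *\<^sub>R (x - x0))) (at x)"
    by (rule has_derivative_transform_within_open[OF dV U(1) U(2)]) (simp add: gU)
  then show "grad f differentiable (at x)" by (auto simp: differentiable_def)
  have dGj: "((\<lambda>y. grad f y $ j) has_derivative
     (\<lambda>h. ((\<psi>' r / r) *\<^sub>R h + (q' * (h \<bullet> sgn (x - x0))) *\<^sub>R (x - x0)) $ j)) (at x)" for j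
    by (rule bounded_linear.has_derivative[OF bounded_linear_vec_nth dG])
  have "hess f x $ i $ j = (\<psi>' r / r) * (if i = j then 1 else 0)
        + (\<psi>'' r - \<psi>' r / r) * (sgn (x - x0))$i * (sgn (x - x0))$j" for i j
  proof -
    have "hess f x $ i $ j = (\<psi>' r / r) * (if i = j then 1 else 0) + q' * (sgn (x - x0))$i * (x - x0)$j"
      unfolding hess_def frechet_derivative_at[OF dGj, symmetric]
      by (simp add: inner_axis', simp add: axis_def)
    also have "(x - x0)$j = r * (sgn (x - x0))$j"
      using r0 by (simp add: sgn_div_norm r_def dist_norm)
    finally have H: "hess f x $ i $ j = (\<psi>' r / r) * (if i = j then 1 else 0) + (q' * r) * ((sgn (x - x0))$i * (sgn (x - x0))$j)"
      by (simp add: algebra_simps)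
    have "q' * r = \<psi>'' r - \<psi>' r / r" using r0 by (simp add: q'_def field_simps power2_eq_square)
    then show ?thesis using H by simp
  qed
  then show "hess f x = (\<chi> i j. (\<psi>' (dist x x0) / dist x x0) * (if i = j then 1 else 0)
        + (\<psi>'' (dist x x0) - \<psi>' (dist x x0) / dist x x0) * (sgn (x - x0))$i * (sgn (x - x0))$j)"
    by (simp add: vec_eq_iff r_def)
qed


lemma deriv_nonneg_limit:
  fixes \<phi> :: "real \<Rightarrow> real"
  assumes t: "t > 0"
    and d: "\<And>s. 0 < s \<Longrightarrow> s \<le> t \<Longrightarrow> \<exists>y. (\<phi> has_real_derivative y) (at s) \<and> y \<ge> 0"
    and l: "(\<phi> \<longlongrightarrow> 0) (at_right 0)"
  shows "\<phi> t \<ge> 0"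
proof -
  have le: "\<phi> s \<le> \<phi> t" if "0 < s" "s < t" for s
  proof (rule DERIV_nonneg_imp_increasing_open[of s t \<phi>])
    show "s \<le> t" using that by simp
    show "\<exists>y. (\<phi> has_real_derivative y) (at x) \<and> 0 \<le> y" if "s < x" "x < t" for x
      using d[of x] that \<open>0 < s\<close> by auto
    show "continuous_on {s..t} \<phi>"
    proof (rule continuous_at_imp_continuous_on, intro ballI)
      fix x assume "x \<in> {s..t}"
      then obtain y where "(\<phi> has_real_derivative y) (at x)" using d[of x] \<open>0 < s\<close> by auto
      then show "isCont \<phi> x" by (rule DERIV_isCont)
    qed
  qed
  have "eventually (\<lambda>s. \<phi> s \<le> \<phi> t) (at_right 0)"
    unfolding eventually_at_right_field using t le by (intro exI[of _ t]) auto
  then show ?thesis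
    using tendsto_upperbound[OF l _ trivial_limit_at_right_real] by blast
qed

lemma ode_identity:
  fixes k :: nat and hs t :: real
  assumes t: "t > 0" and k: "1 \<le> k"
    and d1: "(\<psi> has_real_derivative \<psi>' t) (at t)"
    and d2: "(\<psi>' has_real_derivative \<psi>'' t) (at t)"
    and ode: "((\<lambda>s. s ^ (k - 1) * exp (- hs * s) * \<psi>' s) has_real_derivative
          (exp (- hs * t) * t ^ (k - 1) * \<xi> t)) (at t)"
  shows "\<psi>'' t = \<xi> t + hs * \<psi>' t - real (k - 1) * \<psi>' t / t"
proof -
  define m where "m = k - 1"
  define E where "E = exp (- hs * t)"
  have E0: "E > 0" by (simp add: E_def)
  have D: "((\<lambda>s. s ^ m * exp (- hs * s) * \<psi>' s) has_real_derivative
      (real m * t ^ (m - 1) * E * \<psi>' t + t ^ m * (E * (- hs)) * \<psi>' t + t ^ m * E * \<psi>'' t)) (at t)"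
    unfolding E_def
    by (rule derivative_eq_intros DERIV_pow d2 refl | simp add: algebra_simps)+
  have eq: "real m * t ^ (m - 1) * E * \<psi>' t + t ^ m * (E * (- hs)) * \<psi>' t + t ^ m * E * \<psi>'' t
      = E * t ^ m * \<xi> t"
    using DERIV_unique[OF D ode[folded m_def]] by (simp add: E_def)
  have tm: "real m * t ^ (m - 1) = real m * t ^ m / t"
    using t by (cases m) (auto simp: field_simps)
  have "t ^ m * E * (\<psi>'' t - \<xi> t - hs * \<psi>' t + real m * \<psi>' t / t) = 0"
    using eq unfolding tm by (simp add: algebra_simps)
  then have "\<psi>'' t - \<xi> t - hs * \<psi>' t + real m * \<psi>' t / t = 0"
    using t E0 by simp
  then show ?thesis unfolding m_def by simp
qed

lemma g_limit:
  assumes lim0: "((\<lambda>t. t ^ (k - 1) * \<psi>' t) \<longlongrightarrow> 0) (at_right 0)"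
  shows "((\<lambda>s. s ^ (k - 1) * exp (- hs * s) * \<psi>' s) \<longlongrightarrow> 0) (at_right (0::real))"
proof -
  have e: "((\<lambda>s. exp (- hs * s)) \<longlongrightarrow> exp (- hs * 0)) (at_right (0::real))"
    by (intro tendsto_intros)
  have "((\<lambda>s. (s ^ (k - 1) * \<psi>' s) * exp (- hs * s)) \<longlongrightarrow> 0 * exp (- hs * 0)) (at_right (0::real))"
    by (rule tendsto_mult[OF lim0 e])
  then show ?thesis by (simp add: algebra_simps)
qed

lemma pow_limit: "k \<ge> 1 \<Longrightarrow> ((\<lambda>s. c * s ^ k / real k) \<longlongrightarrow> 0) (at_right (0::real))"
proof -
  assume "k \<ge> 1"
  have "((\<lambda>s. c * s ^ k / real k) \<longlongrightarrow> c * 0 ^ k / real k) (at_right (0::real))"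
    by (intro tendsto_intros) (use \<open>k \<ge> 1\<close> in auto)
  then show ?thesis using \<open>k \<ge> 1\<close> by (simp add: power_0_left)
qed

lemma psi'_lower:
  fixes k :: nat and hs t R :: real
  assumes t: "0 < t" "t < R" and k: "1 \<le> k" and hs: "hs \<ge> 0"
    and xi_nonneg: "\<And>t. 0 < t \<Longrightarrow> \<xi> t \<ge> 0"
    and xi_mono: "\<And>s t. 0 < s \<Longrightarrow> s \<le> t \<Longrightarrow> \<xi> t \<le> \<xi> s"
    and ode: "\<And>t. t \<in> {0<..<R} \<Longrightarrow>
       ((\<lambda>s. s ^ (k - 1) * exp (- hs * s) * \<psi>' s) has_real_derivative
          (exp (- hs * t) * t ^ (k - 1) * \<xi> t)) (at t)"
    and lim0: "((\<lambda>t. t ^ (k - 1) * \<psi>' t) \<longlongrightarrow> 0) (at_right 0)"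
  shows "\<psi>' t \<ge> \<xi> t * t / real k"
proof -
  define m where "m = k - 1"
  have km: "k = Suc m" using k m_def by simp
  define c where "c = \<xi> t * exp (- hs * t)"
  define \<phi> where "\<phi> s = s ^ m * exp (- hs * s) * \<psi>' s - c * s ^ k / real k" for s
  have "\<phi> t \<ge> 0"
  proof (rule deriv_nonneg_limit[OF t(1)])
    fix s assume s: "0 < s" "s \<le> t"
    have dg: "((\<lambda>s. s ^ m * exp (- hs * s) * \<psi>' s) has_real_derivative exp (- hs * s) * s ^ m * \<xi> s) (at s)"
      using ode[of s] s t by (simp add: m_def)
    have dp: "((\<lambda>s. c * s ^ k / real k) has_real_derivative c * (real k * s ^ (k - 1)) / real k) (at s)"
      using DERIV_pow[of k s] by (intro DERIV_cdivide DERIV_cmult) simp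
    have "(\<phi> has_real_derivative (exp (- hs * s) * s ^ m * \<xi> s - c * (real k * s ^ m) / real k)) (at s)"
      unfolding \<phi>_def using DERIV_diff[OF dg dp] by (simp add: m_def)
    moreover have "exp (- hs * s) * s ^ m * \<xi> s - c * (real k * s ^ m) / real k
        = s ^ m * (exp (- hs * s) * \<xi> s - exp (- hs * t) * \<xi> t)"
      using k by (simp add: c_def field_simps)
    moreover have "exp (- hs * t) * \<xi> t \<le> exp (- hs * s) * \<xi> s"
    proof (rule mult_mono)
      show "exp (- hs * t) \<le> exp (- hs * s)" using s hs by (simp add: mult_left_mono)
      show "\<xi> t \<le> \<xi> s" using xi_mono s by simp
    qed (use xi_mono xi_nonneg s in auto)
    ultimately show "\<exists>y. (\<phi> has_real_derivative y) (at s) \<and> y \<ge> 0"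
      using s by (intro exI[of _ "s ^ m * (exp (- hs * s) * \<xi> s - exp (- hs * t) * \<xi> t)"]) auto
  next
    show "(\<phi> \<longlongrightarrow> 0) (at_right 0)"
      unfolding \<phi>_def using tendsto_diff[OF g_limit[OF lim0] pow_limit[OF k, of c]]
      by (simp add: m_def)
  qed
  then have "t ^ m * exp (- hs * t) * \<psi>' t \<ge> \<xi> t * exp (- hs * t) * t ^ k / real k"
    by (simp add: \<phi>_def c_def)
  then have "t ^ m * exp (- hs * t) * \<psi>' t \<ge> t ^ m * exp (- hs * t) * (\<xi> t * t / real k)"
    by (simp add: km field_simps)
  moreover have "t ^ m * exp (- hs * t) > 0" using t by simp
  ultimately show ?thesis by (meson mult_le_cancel_left_pos)
qed

lemma psi'_upper:
  fixes k :: nat and hs t R :: real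
  assumes t: "0 < t" "t < R" and k: "1 \<le> k" and hs: "hs \<ge> 0"
    and xi_nonneg: "\<And>t. 0 < t \<Longrightarrow> \<xi> t \<ge> 0"
    and xi0: "\<And>s. 0 < s \<Longrightarrow> \<xi> s \<le> x0"
    and ode: "\<And>t. t \<in> {0<..<R} \<Longrightarrow>
       ((\<lambda>s. s ^ (k - 1) * exp (- hs * s) * \<psi>' s) has_real_derivative
          (exp (- hs * t) * t ^ (k - 1) * \<xi> t)) (at t)"
    and lim0: "((\<lambda>t. t ^ (k - 1) * \<psi>' t) \<longlongrightarrow> 0) (at_right 0)"
  shows "\<psi>' t \<le> x0 * exp (hs * t) * t / real k"
proof -
  define m where "m = k - 1"
  have km: "k = Suc m" using k m_def by simp
  define \<phi> where "\<phi> s = x0 * s ^ k / real k - s ^ m * exp (- hs * s) * \<psi>' s" for s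
  have "\<phi> t \<ge> 0"
  proof (rule deriv_nonneg_limit[OF t(1)])
    fix s assume s: "0 < s" "s \<le> t"
    have dg: "((\<lambda>s. s ^ m * exp (- hs * s) * \<psi>' s) has_real_derivative exp (- hs * s) * s ^ m * \<xi> s) (at s)"
      using ode[of s] s t by (simp add: m_def)
    have dp: "((\<lambda>s. x0 * s ^ k / real k) has_real_derivative x0 * (real k * s ^ (k - 1)) / real k) (at s)"
      using DERIV_pow[of k s] by (intro DERIV_cdivide DERIV_cmult) simp
    have "(\<phi> has_real_derivative (x0 * (real k * s ^ m) / real k - exp (- hs * s) * s ^ m * \<xi> s)) (at s)"
      unfolding \<phi>_def using DERIV_diff[OF dp dg] by (simp add: m_def)
    moreover have "x0 * (real k * s ^ m) / real k - exp (- hs * s) * s ^ m * \<xi> s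
        = s ^ m * (x0 - exp (- hs * s) * \<xi> s)"
      using k by (simp add: field_simps)
    moreover have "exp (- hs * s) * \<xi> s \<le> 1 * x0"
    proof (rule mult_mono)
      show "exp (- hs * s) \<le> 1" using s hs by simp
    qed (use xi0 xi_nonneg s in auto)
    ultimately show "\<exists>y. (\<phi> has_real_derivative y) (at s) \<and> y \<ge> 0"
      using s by (intro exI[of _ "s ^ m * (x0 - exp (- hs * s) * \<xi> s)"]) auto
  next
    show "(\<phi> \<longlongrightarrow> 0) (at_right 0)"
      unfolding \<phi>_def using tendsto_diff[OF pow_limit[OF k, of x0] g_limit[OF lim0]]
      by (simp add: m_def)
  qed
  then have "t ^ m * exp (- hs * t) * \<psi>' t \<le> x0 * t ^ k / real k"
    by (simp add: \<phi>_def)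
  then have "t ^ m * exp (- hs * t) * \<psi>' t \<le> t ^ m * exp (- hs * t) * (x0 * exp (hs * t) * t / real k)"
    by (simp add: km field_simps exp_minus)
  moreover have "t ^ m * exp (- hs * t) > 0" using t by simp
  ultimately show ?thesis by (meson mult_le_cancel_left_pos)
qed


lemma final_ineq:
  fixes r R h hs \<xi> p a :: real and k :: nat
  assumes r: "0 < r" "r < R" and k: "1 \<le> k" and h: "h \<ge> 0" and hs: "hs \<ge> 0"
    and hR: "h * R < real k" and hs1: "hs \<ge> h / (real k - h * R)" and hs2: "hs \<ge> h"
    and xi: "\<xi> \<ge> 0" and p: "p \<ge> \<xi> * r / real k" "p \<ge> 0"
    and a: "a = \<xi> + hs * p - real (k - 1) * p / r"
  shows "min (a + real (k - 1) * (p / r)) (real k * (p / r)) - h * p \<ge> \<xi> / (1 + hs * R)"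
proof -
  have R0: "R > 0" using r by simp
  have D: "1 + hs * R \<ge> 1" using hs R0 by simp
  have xiD: "\<xi> / (1 + hs * R) \<le> \<xi>" using D xi by (simp add: divide_le_eq mult_le_cancel_left1 less_le_trans[OF zero_less_one])
  have A: "a + real (k - 1) * (p / r) - h * p \<ge> \<xi> / (1 + hs * R)"
  proof -
    have "a + real (k - 1) * (p / r) - h * p = \<xi> + (hs - h) * p" using a by (simp add: algebra_simps)
    moreover have "(hs - h) * p \<ge> 0" using hs2 p by simp
    ultimately show ?thesis using xiD by linarith
  qed
  have kpos: "real k - h * R > 0" using hR by simp
  have hr: "h * r \<le> h * R" using h r by (simp add: mult_left_mono)
  have khr: "real k - h * r > 0" using hR hr by linarith
  have hsk: "hs * (real k - h * R) \<ge> h" using hs1 kpos by (simp add: divide_le_eq)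
  have B: "real k * (p / r) - h * p \<ge> \<xi> / (1 + hs * R)"
  proof -
    have "real k * (p / r) - h * p = p * ((real k - h * r) / r)" using r by (simp add: field_simps)
    also have "\<dots> \<ge> (\<xi> * r / real k) * ((real k - h * r) / r)"
      using p khr r by (intro mult_right_mono) auto
    also have "(\<xi> * r / real k) * ((real k - h * r) / r) = \<xi> * (real k - h * r) / real k"
      using r k by (simp add: field_simps)
    finally have 1: "real k * (p / r) - h * p \<ge> \<xi> * (real k - h * r) / real k" .
    have "real k = real k - h * R + R * h" by simp
    also have "\<dots> \<le> real k - h * R + R * (hs * (real k - h * R))" using hsk R0 by (simp add: mult_left_mono)
    also have "\<dots> = (real k - h * R) * (1 + hs * R)" by (simp add: algebra_simps)
    also have "\<dots> \<le> (real k - h * r) * (1 + hs * R)"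
      using hr D by (intro mult_right_mono) auto
    finally have 2: "(real k - h * r) * (1 + hs * R) \<ge> real k" by simp
    have "\<xi> / (1 + hs * R) \<le> \<xi> * (real k - h * r) / real k"
      using 2 D xi k by (simp add: divide_simps mult_left_mono) (smt (verit) mult_left_mono mult.assoc mult.commute)
    then show ?thesis using 1 by linarith
  qed
  show ?thesis using A B by (simp add: min_def)
qed


lemma part1_point:
  fixes k :: nat and R h hs :: real
    and \<xi> \<psi> \<psi>' \<psi>'' :: "real \<Rightarrow> real"
    and x0 x :: "real^'n" and f :: "real^'n \<Rightarrow> real"
  assumes k: "1 \<le> k" "k \<le> CARD('n)"
    and R: "R > 0"
    and h: "h \<ge> 0" and hs: "hs \<ge> 0"
    and hR: "h * R < real k"
    and hs_ge: "hs \<ge> max h (h / (real k - h * R))"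
    and xi_mono: "\<And>s t. 0 < s \<Longrightarrow> s \<le> t \<Longrightarrow> \<xi> t \<le> \<xi> s"
    and xi_nonneg: "\<And>t. 0 < t \<Longrightarrow> \<xi> t \<ge> 0"
    and psi_d1: "\<And>t. t \<in> {0<..<R} \<Longrightarrow> (\<psi> has_real_derivative \<psi>' t) (at t)"
    and psi_d2: "\<And>t. t \<in> {0<..<R} \<Longrightarrow> (\<psi>' has_real_derivative \<psi>'' t) (at t)"
    and ode: "\<And>t. t \<in> {0<..<R} \<Longrightarrow>
       ((\<lambda>s. s ^ (k - 1) * exp (- hs * s) * \<psi>' s) has_real_derivative
          (exp (- hs * t) * t ^ (k - 1) * \<xi> t)) (at t)"
    and lim0: "((\<lambda>t. t ^ (k - 1) * \<psi>' t) \<longlongrightarrow> 0) (at_right 0)"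
    and fU: "\<And>y. y \<in> ball x0 R - {x0} \<Longrightarrow> f y = \<psi> (dist y x0)"
    and x: "x \<in> ball x0 R - {x0}"
  shows "Pk_minus k (hess f x) - h * norm (grad f x) \<ge> \<xi> (dist x x0) / (1 + hs * R)"
proof -
  let ?U = "ball x0 R - {x0}"
  have U: "open ?U" "x \<in> ?U" "x0 \<notin> ?U" using x by auto
  have dU: "dist y x0 \<in> {0<..<R}" if "y \<in> ?U" for y
    using that by (auto simp: dist_commute)
  have d1: "\<And>y. y \<in> ?U \<Longrightarrow> (\<psi> has_real_derivative \<psi>' (dist y x0)) (at (dist y x0))"
    using psi_d1 dU by blast
  have d2: "\<And>y. y \<in> ?U \<Longrightarrow> (\<psi>' has_real_derivative \<psi>'' (dist y x0)) (at (dist y x0))"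
    using psi_d2 dU by blast
  define r where "r = dist x x0"
  have r: "0 < r" "r < R" using dU[OF x] by (auto simp: r_def)
  have e: "norm (sgn (x - x0)) = 1" using x by (simp add: norm_sgn)
  have H: "hess f x = (\<chi> i j. (\<psi>' r / r) * (if i = j then 1 else 0)
        + (\<psi>'' r - \<psi>' r / r) * (sgn (x - x0))$i * (sgn (x - x0))$j)"
    using radial_hess(3)[OF U fU d1 d2] by (simp add: r_def)
  have G: "grad f x = (\<psi>' r / r) *\<^sub>R (x - x0)"
    using radial_grad(2)[OF U fU d1] by (simp add: r_def)
  have plow: "\<psi>' r \<ge> \<xi> r * r / real k"
    by (rule psi'_lower[OF r k(1) hs xi_nonneg xi_mono ode lim0])
  have pnn: "\<psi>' r \<ge> 0"
    using plow xi_nonneg[OF r(1)] r k by (smt (verit) divide_nonneg_nonneg mult_nonneg_nonneg of_nat_0_le_iff)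
  have nG: "norm (grad f x) = \<psi>' r"
    using r pnn by (simp add: G r_def dist_norm)
  have a: "\<psi>'' r = \<xi> r + hs * \<psi>' r - real (k - 1) * \<psi>' r / r"
    using ode_identity[of r k \<psi> \<psi>' \<psi>'' hs \<xi>] psi_d1[of r] psi_d2[of r] ode[of r] r k by auto
  have P: "Pk_minus k (hess f x) \<ge> min (\<psi>'' r + real (k - 1) * (\<psi>' r / r)) (real k * (\<psi>' r / r))"
    unfolding H by (rule Pk_rank1[OF e k])
  have "min (\<psi>'' r + real (k - 1) * (\<psi>' r / r)) (real k * (\<psi>' r / r)) - h * \<psi>' r \<ge> \<xi> r / (1 + hs * R)"
    by (rule final_ineq[OF r k(1) h hs hR _ _ xi_nonneg[OF r(1)] plow pnn a]) (use hs_ge in auto)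
  then show ?thesis using P nG by (simp add: r_def)
qed


locale setting2 =
  fixes k :: nat and R h hs :: real
    and \<xi> \<psi> \<psi>' \<psi>'' :: "real \<Rightarrow> real"
  assumes k: "1 \<le> k"
    and R: "R > 0"
    and hs: "hs \<ge> 0"
    and xi_mono: "\<And>s t. 0 < s \<Longrightarrow> s \<le> t \<Longrightarrow> \<xi> t \<le> \<xi> s"
    and xi_nonneg: "\<And>t. 0 < t \<Longrightarrow> \<xi> t \<ge> 0"
    and psi_d1: "\<And>t. t \<in> {0<..<R} \<Longrightarrow> (\<psi> has_real_derivative \<psi>' t) (at t)"
    and psi_d2: "\<And>t. t \<in> {0<..<R} \<Longrightarrow> (\<psi>' has_real_derivative \<psi>'' t) (at t)"
    and psi_C2: "continuous_on {0<..<R} \<psi>''"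
    and ode: "\<And>t. t \<in> {0<..<R} \<Longrightarrow>
       ((\<lambda>s. s ^ (k - 1) * exp (- hs * s) * \<psi>' s) has_real_derivative
          (exp (- hs * t) * t ^ (k - 1) * \<xi> t)) (at t)"
    and lim0: "((\<lambda>t. t ^ (k - 1) * \<psi>' t) \<longlongrightarrow> 0) (at_right 0)"
    and xi_cont0: "continuous_on {0..} \<xi>"
begin

definition "c = \<xi> 0 / real k"
definition "C = \<xi> 0 * exp (hs * R) / real k"

lemma xi_lim: "(\<xi> \<longlongrightarrow> \<xi> 0) (at_right 0)"
proof -
  have "(\<xi> \<longlongrightarrow> \<xi> 0) (at 0 within {0..})"
    using xi_cont0 by (simp add: continuous_on_def)
  then show ?thesis by (rule tendsto_within_subset) auto
qed

lemma xi_le0: "0 < s \<Longrightarrow> \<xi> s \<le> \<xi> 0"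
proof -
  assume s: "0 < s"
  have "eventually (\<lambda>u. \<xi> s \<le> \<xi> u) (at_right 0)"
    unfolding eventually_at_right_field using s xi_mono by (intro exI[of _ s]) auto
  then show ?thesis using tendsto_lowerbound[OF xi_lim _ trivial_limit_at_right_real] by blast
qed

lemma xi0_nonneg: "\<xi> 0 \<ge> 0"
  using xi_le0[of 1] xi_nonneg[of 1] by simp

lemma psi'_nonneg: "t \<in> {0<..<R} \<Longrightarrow> \<psi>' t \<ge> 0"
proof -
  assume t: "t \<in> {0<..<R}"
  have "\<psi>' t \<ge> \<xi> t * t / real k"
    using t by (intro psi'_lower[OF _ _ k hs xi_nonneg xi_mono ode lim0]) auto
  moreover have "\<xi> t * t / real k \<ge> 0" using xi_nonneg[of t] t by auto
  ultimately show ?thesis by linarith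
qed

lemma psi'_le: "t \<in> {0<..<R} \<Longrightarrow> \<psi>' t \<le> C * t"
proof -
  assume t: "t \<in> {0<..<R}"
  have "\<psi>' t \<le> \<xi> 0 * exp (hs * t) * t / real k"
    using t by (intro psi'_upper[OF _ _ k hs xi_nonneg xi_le0 ode lim0]) auto
  also have "\<dots> \<le> \<xi> 0 * exp (hs * R) * t / real k"
    using t hs xi0_nonneg by (intro divide_right_mono mult_right_mono mult_left_mono) (auto simp: mult_left_mono)
  finally show ?thesis using k by (simp add: C_def)
qed

lemma q_lim: "((\<lambda>t. \<psi>' t / t) \<longlongrightarrow> c) (at_right 0)"
proof (rule tendsto_sandwich)
  have ev: "eventually (\<lambda>t. t \<in> {0<..<R}) (at_right 0)"
    unfolding eventually_at_right_field using R by (intro exI[of _ R]) auto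
  show "eventually (\<lambda>t. \<xi> t / real k \<le> \<psi>' t / t) (at_right 0)"
  proof (rule eventually_mono[OF ev])
    fix t assume t: "t \<in> {0<..<R}"
    have "\<psi>' t \<ge> \<xi> t * t / real k"
      using t by (intro psi'_lower[OF _ _ k hs xi_nonneg xi_mono ode lim0]) auto
    then show "\<xi> t / real k \<le> \<psi>' t / t" using t by (simp add: field_simps)
  qed
  show "eventually (\<lambda>t. \<psi>' t / t \<le> \<xi> 0 * exp (hs * t) / real k) (at_right 0)"
  proof (rule eventually_mono[OF ev])
    fix t assume t: "t \<in> {0<..<R}"
    have "\<psi>' t \<le> \<xi> 0 * exp (hs * t) * t / real k"
      using t by (intro psi'_upper[OF _ _ k hs xi_nonneg xi_le0 ode lim0]) auto
    then show "\<psi>' t / t \<le> \<xi> 0 * exp (hs * t) / real k" using t by (simp add: field_simps)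
  qed
  show "((\<lambda>t. \<xi> t / real k) \<longlongrightarrow> c) (at_right 0)"
    unfolding c_def by (intro tendsto_divide tendsto_const xi_lim) (use k in simp)
  have "((\<lambda>t. \<xi> 0 * exp (hs * t) / real k) \<longlongrightarrow> \<xi> 0 * exp (hs * 0) / real k) (at_right 0)"
    by (intro tendsto_intros) (use k in simp)
  then show "((\<lambda>t. \<xi> 0 * exp (hs * t) / real k) \<longlongrightarrow> c) (at_right 0)" by (simp add: c_def)
qed

lemma psi''_lim: "(\<psi>'' \<longlongrightarrow> c) (at_right 0)"
proof -
  have ev: "eventually (\<lambda>t. t \<in> {0<..<R}) (at_right 0)"
    unfolding eventually_at_right_field using R by (intro exI[of _ R]) auto
  have eq: "eventually (\<lambda>t. \<xi> t + hs * ((\<psi>' t / t) * t) - real (k - 1) * (\<psi>' t / t) = \<psi>'' t) (at_right 0)"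
  proof (rule eventually_mono[OF ev])
    fix t assume t: "t \<in> {0<..<R}"
    show "\<xi> t + hs * ((\<psi>' t / t) * t) - real (k - 1) * (\<psi>' t / t) = \<psi>'' t"
      using ode_identity[of t k \<psi> \<psi>' \<psi>'' hs \<xi>] t psi_d1 psi_d2 ode k by auto
  qed
  have "((\<lambda>t. \<xi> t + hs * ((\<psi>' t / t) * t) - real (k - 1) * (\<psi>' t / t)) \<longlongrightarrow>
      \<xi> 0 + hs * (c * 0) - real (k - 1) * c) (at_right 0)"
    by (intro tendsto_intros xi_lim q_lim)
  moreover have "\<xi> 0 + hs * (c * 0) - real (k - 1) * c = c"
    using k by (simp add: c_def field_simps of_nat_diff)
  ultimately show ?thesis using tendsto_cong[OF eq] by simp
qed


lemma C_nonneg: "C \<ge> 0"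
  using xi0_nonneg k by (simp add: C_def)

lemma contI: "0 < s \<Longrightarrow> t < R \<Longrightarrow> continuous_on {s..t} \<psi>"
proof (rule continuous_at_imp_continuous_on, intro ballI)
  fix x assume "0 < s" "t < R" "x \<in> {s..t}"
  then have "(\<psi> has_real_derivative \<psi>' x) (at x)" by (intro psi_d1) auto
  then show "isCont \<psi> x" by (rule DERIV_isCont)
qed

lemma psi_mono: "0 < s \<Longrightarrow> s \<le> t \<Longrightarrow> t < R \<Longrightarrow> \<psi> s \<le> \<psi> t"
proof (rule DERIV_nonneg_imp_increasing_open[of s t \<psi>])
  fix x assume "0 < s" "t < R" "s < x" "x < t"
  then show "\<exists>y. (\<psi> has_real_derivative y) (at x) \<and> 0 \<le> y"
    by (intro exI[of _ "\<psi>' x"] conjI psi_d1 psi'_nonneg) auto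
qed (auto intro!: contI)

lemma psi_diff_le: "0 < s \<Longrightarrow> s \<le> t \<Longrightarrow> t < R \<Longrightarrow> \<psi> t - \<psi> s \<le> C * t^2"
proof -
  assume st: "0 < s" "s \<le> t" "t < R"
  have "C * t * s - \<psi> s \<le> C * t * t - \<psi> t"
  proof (rule DERIV_nonneg_imp_increasing_open[of s t "\<lambda>u. C * t * u - \<psi> u"])
    show "s \<le> t" using st by simp
    show "continuous_on {s..t} (\<lambda>u. C * t * u - \<psi> u)"
      using contI[of s t] st by (intro continuous_intros) auto
    fix u assume u: "s < u" "u < t"
    have d: "((\<lambda>u. C * t * u - \<psi> u) has_real_derivative C * t * 1 - \<psi>' u) (at u)"
      using u st by (intro derivative_intros psi_d1) auto
    have "\<psi>' u \<le> C * u" using u st by (intro psi'_le) auto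
    also have "\<dots> \<le> C * t" using u C_nonneg by (intro mult_left_mono) auto
    finally show "\<exists>y. ((\<lambda>u. C * t * u - \<psi> u) has_real_derivative y) (at u) \<and> 0 \<le> y"
      using d by (intro exI[of _ "C * t * 1 - \<psi>' u"]) auto
  qed
  moreover have "C * t * s \<ge> 0" using st C_nonneg by simp
  ultimately show ?thesis by (simp add: power2_eq_square)
qed

definition "L = Inf (\<psi> ` {0<..<R})"

lemma bdd: "bdd_below (\<psi> ` {0<..<R})"
proof (rule bdd_belowI2)
  fix u assume u: "u \<in> {0<..<R}"
  show "\<psi> (R/2) - C * (R/2)^2 \<le> \<psi> u"
  proof (cases "u \<le> R/2")
    case True
    then show ?thesis using psi_diff_le[of u "R/2"] u R by auto
  next
    case False
    moreover have "C * (R/2)^2 \<ge> 0" using C_nonneg by simp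
    ultimately show ?thesis using psi_mono[of "R/2" u] u R by auto
  qed
qed

lemma L_le: "t \<in> {0<..<R} \<Longrightarrow> L \<le> \<psi> t"
  unfolding L_def by (rule cInf_lower) (use bdd in auto)

lemma psi_L: "t \<in> {0<..<R} \<Longrightarrow> \<psi> t - L \<le> C * t^2"
proof -
  assume t: "t \<in> {0<..<R}"
  have "\<psi> t - C * t^2 \<le> L"
    unfolding L_def
  proof (rule cInf_greatest)
    show "\<psi> ` {0<..<R} \<noteq> {}" using R by auto
    fix y assume "y \<in> \<psi> ` {0<..<R}"
    then obtain u where u: "u \<in> {0<..<R}" "y = \<psi> u" by auto
    show "\<psi> t - C * t^2 \<le> y"
    proof (cases "u \<le> t")
      case True
      then show ?thesis using psi_diff_le[of u t] u t by auto
    next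
      case False
      moreover have "C * t^2 \<ge> 0" using C_nonneg by simp
      ultimately show ?thesis using psi_mono[of t u] u t by auto
    qed
  qed
  then show ?thesis by simp
qed

lemma psi_lim: "(\<psi> \<longlongrightarrow> L) (at_right 0)"
proof (rule tendsto_sandwich[of "\<lambda>_. L" _ _ "\<lambda>t. L + C * t^2"])
  have ev: "eventually (\<lambda>t. t \<in> {0<..<R}) (at_right 0)"
    unfolding eventually_at_right_field using R by (intro exI[of _ R]) auto
  show "eventually (\<lambda>t. L \<le> \<psi> t) (at_right 0)" by (rule eventually_mono[OF ev]) (rule L_le)
  show "eventually (\<lambda>t. \<psi> t \<le> L + C * t^2) (at_right 0)"
    by (rule eventually_mono[OF ev]) (use psi_L in force)
  show "((\<lambda>_. L) \<longlongrightarrow> L) (at_right 0)" by simp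
  have "((\<lambda>t. L + C * t^2) \<longlongrightarrow> L + C * 0^2) (at_right (0::real))" by (intro tendsto_intros)
  then show "((\<lambda>t. L + C * t^2) \<longlongrightarrow> L) (at_right 0)" by simp
qed


lemma comp_dist:
  fixes x0 :: "real^'n"
  assumes "(g \<longlongrightarrow> l) (at_right 0)"
  shows "((\<lambda>y. g (dist y x0)) \<longlongrightarrow> l) (at x0)"
proof -
  have "filterlim (\<lambda>y. dist y x0) (at_right 0) (at x0)"
    unfolding filterlim_at
  proof
    show "\<forall>\<^sub>F y in at x0. dist y x0 \<in> {0<..} \<and> dist y x0 \<noteq> 0"
      unfolding eventually_at_filter by auto
    have "((\<lambda>y. dist y x0) \<longlongrightarrow> dist x0 x0) (at x0)" by (intro tendsto_intros)
    then show "((\<lambda>y. dist y x0) \<longlongrightarrow> 0) (at x0)" by simp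
  qed
  then show ?thesis by (rule filterlim_compose[OF assms])
qed

lemma ev_U:
  fixes x0 :: "real^'n"
  shows "eventually (\<lambda>y. y \<in> ball x0 R - {x0}) (at x0)"
proof -
  have "eventually (\<lambda>y. y \<in> ball x0 R) (at x0)"
    using R by (intro eventually_at_in_open') auto
  then show ?thesis unfolding eventually_at_filter by (rule eventually_mono) auto
qed

lemma W_basic:
  fixes x0 :: "real^'n" and f :: "real^'n \<Rightarrow> real"
  assumes fW: "f = (\<lambda>y. if y = x0 then L else \<psi> (dist y x0))"
  shows "\<And>y. y \<in> ball x0 R - {x0} \<Longrightarrow> f y = \<psi> (dist y x0)"
    and "\<And>y. y \<in> ball x0 R - {x0} \<Longrightarrow> (\<psi> has_real_derivative \<psi>' (dist y x0)) (at (dist y x0))"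
    and "\<And>y. y \<in> ball x0 R - {x0} \<Longrightarrow> (\<psi>' has_real_derivative \<psi>'' (dist y x0)) (at (dist y x0))"
    and "open (ball x0 R - {x0})" "x0 \<notin> ball x0 R - {x0}"
  using fW by (auto intro!: psi_d1 psi_d2 simp: dist_commute)

lemma W_deriv0:
  fixes x0 :: "real^'n" and f :: "real^'n \<Rightarrow> real"
  assumes fW: "f = (\<lambda>y. if y = x0 then L else \<psi> (dist y x0))"
  shows "(f has_derivative (\<lambda>h. 0)) (at x0)"
  unfolding has_derivative_at2
proof (intro conjI bounded_linear_zero)
  show "((\<lambda>y. (1 / norm (y - x0)) *\<^sub>R (f y - (f x0 + 0))) \<longlongrightarrow> 0) (at x0)"
  proof (rule Lim_null_comparison)
    show "eventually (\<lambda>y. norm ((1 / norm (y - x0)) *\<^sub>R (f y - (f x0 + 0))) \<le> C * dist y x0) (at x0)"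
    proof (rule eventually_mono[OF ev_U])
      fix y assume y: "y \<in> ball x0 R - {x0}"
      then have t: "dist y x0 \<in> {0<..<R}" by (auto simp: dist_commute)
      have "\<bar>\<psi> (dist y x0) - L\<bar> \<le> C * (dist y x0)^2"
        using psi_L[OF t] L_le[OF t] by auto
      then show "norm ((1 / norm (y - x0)) *\<^sub>R (f y - (f x0 + 0))) \<le> C * dist y x0"
        using y t by (simp add: fW dist_norm field_simps power2_eq_square)
    qed
    have "((\<lambda>y. C * dist y x0) \<longlongrightarrow> C * dist x0 x0) (at x0)" by (intro tendsto_intros)
    then show "((\<lambda>y. C * dist y x0) \<longlongrightarrow> 0) (at x0)" by simp
  qed
qed

lemma W_grad0:
  fixes x0 :: "real^'n" and f :: "real^'n \<Rightarrow> real"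
  assumes fW: "f = (\<lambda>y. if y = x0 then L else \<psi> (dist y x0))"
  shows "grad f x0 = 0"
  unfolding grad_def frechet_derivative_at[OF W_deriv0[OF fW], symmetric] by (simp add: vec_eq_iff)

lemma W_grad_deriv0:
  fixes x0 :: "real^'n" and f :: "real^'n \<Rightarrow> real"
  assumes fW: "f = (\<lambda>y. if y = x0 then L else \<psi> (dist y x0))"
  shows "(grad f has_derivative (\<lambda>h. c *\<^sub>R h)) (at x0)"
  unfolding has_derivative_at2
proof (intro conjI bounded_linear_scaleR_right bounded_linear_ident)
  note B = W_basic[OF fW]
  show "((\<lambda>y. (1 / norm (y - x0)) *\<^sub>R (grad f y - (grad f x0 + c *\<^sub>R (y - x0)))) \<longlongrightarrow> 0) (at x0)"
  proof (rule Lim_null_comparison)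
    show "eventually (\<lambda>y. norm ((1 / norm (y - x0)) *\<^sub>R (grad f y - (grad f x0 + c *\<^sub>R (y - x0))))
         \<le> \<bar>\<psi>' (dist y x0) / dist y x0 - c\<bar>) (at x0)"
    proof (rule eventually_mono[OF ev_U])
      fix y assume y: "y \<in> ball x0 R - {x0}"
      have g: "grad f y = (\<psi>' (dist y x0) / dist y x0) *\<^sub>R (y - x0)"
        using radial_grad(2)[OF B(4) y B(5) B(1) B(2)] by blast
      have "grad f y - (grad f x0 + c *\<^sub>R (y - x0)) = (\<psi>' (dist y x0) / dist y x0 - c) *\<^sub>R (y - x0)"
        by (simp add: g W_grad0[OF fW] algebra_simps)
      then show "norm ((1 / norm (y - x0)) *\<^sub>R (grad f y - (grad f x0 + c *\<^sub>R (y - x0))))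
         \<le> \<bar>\<psi>' (dist y x0) / dist y x0 - c\<bar>"
        using y by (simp add: dist_norm)
    qed
    have "((\<lambda>t. \<bar>\<psi>' t / t - c\<bar>) \<longlongrightarrow> \<bar>c - c\<bar>) (at_right 0)"
      by (intro tendsto_intros q_lim)
    then show "((\<lambda>y. \<bar>\<psi>' (dist y x0) / dist y x0 - c\<bar>) \<longlongrightarrow> 0) (at x0)"
      using comp_dist[of "\<lambda>t. \<bar>\<psi>' t / t - c\<bar>" 0 x0] by simp
  qed
qed

lemma W_hess0:
  fixes x0 :: "real^'n" and f :: "real^'n \<Rightarrow> real"
  assumes fW: "f = (\<lambda>y. if y = x0 then L else \<psi> (dist y x0))"
  shows "hess f x0 = (\<chi> i j. c * (if i = j then 1 else 0))"
proof -
  have "((\<lambda>y. grad f y $ j) has_derivative (\<lambda>h. (c *\<^sub>R h) $ j)) (at x0)" for j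
    by (rule bounded_linear.has_derivative[OF bounded_linear_vec_nth W_grad_deriv0[OF fW]])
  then have fd: "frechet_derivative (\<lambda>y. grad f y $ j) (at x0) = (\<lambda>h. (c *\<^sub>R h) $ j)" for j
    by (metis frechet_derivative_at)
  show ?thesis
    unfolding hess_def fd by (simp add: vec_eq_iff axis_def)
qed


lemma psi'_cont: "continuous_on {0<..<R} \<psi>'"
proof (rule continuous_at_imp_continuous_on, intro ballI)
  fix x assume "x \<in> {0<..<R}"
  then have "(\<psi>' has_real_derivative \<psi>'' x) (at x)" by (intro psi_d2)
  then show "isCont \<psi>' x" by (rule DERIV_isCont)
qed

lemma W_hess_cont:
  fixes x0 :: "real^'n" and f :: "real^'n \<Rightarrow> real"
  assumes fW: "f = (\<lambda>y. if y = x0 then L else \<psi> (dist y x0))"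
  shows "continuous_on (ball x0 R) (hess f)"
proof -
  note B = W_basic[OF fW]
  let ?U = "ball x0 R - {x0}"
  define Hf where "Hf y = (\<chi> i j. (\<psi>' (dist y x0) / dist y x0) * (if i = j then 1 else 0)
        + (\<psi>'' (dist y x0) - \<psi>' (dist y x0) / dist y x0) * (sgn (y - x0))$i * (sgn (y - x0))$j)" for y
  have eqU: "hess f y = Hf y" if y: "y \<in> ?U" for y
    using radial_hess(3)[OF B(4) y B(5) B(1) B(2) B(3)] unfolding Hf_def by blast
  have img: "(\<lambda>y. dist y x0) ` ?U \<subseteq> {0<..<R}" by (auto simp: dist_commute)
  have c1: "continuous_on ?U (\<lambda>y. \<psi>' (dist y x0))"
    by (rule continuous_on_compose2[OF psi'_cont _ img]) (intro continuous_intros)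
  have c2: "continuous_on ?U (\<lambda>y. \<psi>'' (dist y x0))"
    by (rule continuous_on_compose2[OF psi_C2 _ img]) (intro continuous_intros)
  have cs: "continuous_on ?U (\<lambda>y. sgn (y - x0) $ i)" for i
    by (intro continuous_intros) auto
  have cU: "continuous_on ?U Hf"
    unfolding Hf_def
    by (intro continuous_on_vec_lambda continuous_intros c1 c2 cs) auto
  have cU': "continuous_on ?U (hess f)"
    using continuous_on_eq[OF cU] eqU by metis
  have at_U: "isCont (hess f) x" if "x \<in> ?U" for x
    using cU' B(4) that continuous_on_eq_continuous_at by blast
  have at0: "isCont (hess f) x0"
    unfolding continuous_at
  proof -
    have comp: "((\<lambda>y. (\<psi>' (dist y x0) / dist y x0) * (if i = j then 1 else 0)
        + (\<psi>'' (dist y x0) - \<psi>' (dist y x0) / dist y x0) * (sgn (y - x0))$i * (sgn (y - x0))$j)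
        \<longlongrightarrow> c * (if i = j then 1 else 0) + 0) (at x0)" for i j
    proof (rule tendsto_add)
      show "((\<lambda>y. (\<psi>' (dist y x0) / dist y x0) * (if i = j then 1 else 0)) \<longlongrightarrow> c * (if i = j then 1 else 0)) (at x0)"
        by (intro tendsto_mult tendsto_const comp_dist[OF q_lim])
      show "((\<lambda>y. (\<psi>'' (dist y x0) - \<psi>' (dist y x0) / dist y x0) * (sgn (y - x0))$i * (sgn (y - x0))$j) \<longlongrightarrow> 0) (at x0)"
      proof (rule Lim_null_comparison)
        show "eventually (\<lambda>y. norm ((\<psi>'' (dist y x0) - \<psi>' (dist y x0) / dist y x0) * (sgn (y - x0))$i * (sgn (y - x0))$j)
            \<le> \<bar>\<psi>'' (dist y x0) - \<psi>' (dist y x0) / dist y x0\<bar>) (at x0)"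
        proof (rule eventually_mono[OF ev_U])
          fix y assume y: "y \<in> ?U"
          have n1: "norm (sgn (y - x0)) = 1" using y by (simp add: norm_sgn)
          have ei: "\<bar>sgn (y - x0) $ l\<bar> \<le> 1" for l using component_le_norm_cart[of "sgn (y - x0)" l] n1 by simp
          have "\<bar>(sgn (y - x0))$i * (sgn (y - x0))$j\<bar> \<le> 1 * 1"
            unfolding abs_mult by (intro mult_mono ei) auto
          then show "norm ((\<psi>'' (dist y x0) - \<psi>' (dist y x0) / dist y x0) * (sgn (y - x0))$i * (sgn (y - x0))$j)
            \<le> \<bar>\<psi>'' (dist y x0) - \<psi>' (dist y x0) / dist y x0\<bar>"
            by (simp add: abs_mult mult.assoc mult_left_le)
        qed
        have "((\<lambda>t. \<bar>\<psi>'' t - \<psi>' t / t\<bar>) \<longlongrightarrow> \<bar>c - c\<bar>) (at_right 0)"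
          by (intro tendsto_intros q_lim psi''_lim)
        then show "((\<lambda>y. \<bar>\<psi>'' (dist y x0) - \<psi>' (dist y x0) / dist y x0\<bar>) \<longlongrightarrow> 0) (at x0)"
          using comp_dist[of "\<lambda>t. \<bar>\<psi>'' t - \<psi>' t / t\<bar>" 0 x0] by simp
      qed
    qed
    have "(Hf \<longlongrightarrow> (\<chi> i j. c * (if i = j then 1 else 0))) (at x0)"
      unfolding Hf_def using comp by (intro tendsto_vec_lambda) simp
    then have "(Hf \<longlongrightarrow> hess f x0) (at x0)" by (simp add: W_hess0[OF fW])
    moreover have "eventually (\<lambda>y. Hf y = hess f y) (at x0)"
      by (rule eventually_mono[OF ev_U]) (simp add: eqU)
    ultimately show "(hess f \<longlongrightarrow> hess f x0) (at x0)"
      using tendsto_cong by blast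
  qed
  show ?thesis
    using at_U at0 continuous_on_eq_continuous_at[OF open_ball] by blast
qed

lemma W_C2:
  fixes x0 :: "real^'n" and f :: "real^'n \<Rightarrow> real"
  assumes fW: "f = (\<lambda>y. if y = x0 then L else \<psi> (dist y x0))"
  shows "C2_on (ball x0 R) f"
  unfolding C2_on_def
proof (intro conjI ballI W_hess_cont[OF fW])
  note B = W_basic[OF fW]
  fix x assume x: "x \<in> ball x0 R"
  show "f differentiable (at x)"
  proof (cases "x = x0")
    case True then show ?thesis using W_deriv0[OF fW] by (auto simp: differentiable_def)
  next
    case False then show ?thesis using radial_hess(1)[OF B(4) _ B(5) B(1) B(2) B(3)] x by auto
  qed
  show "grad f differentiable (at x)"
  proof (cases "x = x0")
    case True then show ?thesis using W_grad_deriv0[OF fW] by (auto simp: differentiable_def)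
  next
    case False then show ?thesis using radial_hess(2)[OF B(4) _ B(5) B(1) B(2) B(3)] x by auto
  qed
qed

end

theorem mainTheorem4:
  fixes k :: nat and R h hs :: real
    and \<xi> \<psi> \<psi>' \<psi>'' :: "real \<Rightarrow> real"
    and x0 :: "real^'n"
  assumes n2: "CARD('n) \<ge> 2"
    and k: "1 \<le> k" "k \<le> CARD('n)"
    and R: "R > 0"
    and h: "h \<ge> 0" and hs: "hs \<ge> 0"
    and hR: "h * R < real k"
    and hs_ge: "hs \<ge> max h (h / (real k - h * R))"
    and xi_cont: "continuous_on {0<..} \<xi>"
    and xi_mono: "\<And>s t. 0 < s \<Longrightarrow> s \<le> t \<Longrightarrow> \<xi> t \<le> \<xi> s"
    and xi_nonneg: "\<And>t. 0 < t \<Longrightarrow> \<xi> t \<ge> 0"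
    and xi_int: "\<exists>\<delta>>0. (\<lambda>t. t ^ (k - 1) * \<xi> t) integrable_on {0<..\<delta>}"
    and psi_d1: "\<And>t. t \<in> {0<..<R} \<Longrightarrow> (\<psi> has_real_derivative \<psi>' t) (at t)"
    and psi_d2: "\<And>t. t \<in> {0<..<R} \<Longrightarrow> (\<psi>' has_real_derivative \<psi>'' t) (at t)"
    and psi_C2: "continuous_on {0<..<R} \<psi>''"
    and ode: "\<And>t. t \<in> {0<..<R} \<Longrightarrow>
       ((\<lambda>s. s ^ (k - 1) * exp (- hs * s) * \<psi>' s) has_real_derivative
          (exp (- hs * t) * t ^ (k - 1) * \<xi> t)) (at t)"
    and lim0: "((\<lambda>t. t ^ (k - 1) * \<psi>' t) \<longlongrightarrow> 0) (at_right 0)"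
  shows "(\<forall>x \<in> ball x0 R - {x0}.
            Pk_minus k (hess (\<lambda>y. \<psi> (dist y x0)) x)
              - h * norm (grad (\<lambda>y. \<psi> (dist y x0)) x)
            \<ge> \<xi> (dist x x0) / (1 + hs * R))
       \<and> (continuous_on {0..} \<xi> \<longrightarrow>
            (\<exists>L. (\<psi> \<longlongrightarrow> L) (at_right 0) \<and>
               C2_on (ball x0 R) (\<lambda>y. if y = x0 then L else \<psi> (dist y x0)) \<and>
               (\<forall>x \<in> ball x0 R.
                  Pk_minus k (hess (\<lambda>y. if y = x0 then L else \<psi> (dist y x0)) x)
                    - h * norm (grad (\<lambda>y. if y = x0 then L else \<psi> (dist y x0)) x)
                  \<ge> \<xi> (dist x x0) / (1 + hs * R))))"
proof -
  have P1: "\<forall>x \<in> ball x0 R - {x0}.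
            Pk_minus k (hess (\<lambda>y. \<psi> (dist y x0)) x)
              - h * norm (grad (\<lambda>y. \<psi> (dist y x0)) x)
            \<ge> \<xi> (dist x x0) / (1 + hs * R)"
    by (intro ballI part1_point[OF k R h hs hR hs_ge xi_mono xi_nonneg psi_d1 psi_d2 ode lim0]) auto
  have P2: "continuous_on {0..} \<xi> \<longrightarrow>
            (\<exists>L. (\<psi> \<longlongrightarrow> L) (at_right 0) \<and>
               C2_on (ball x0 R) (\<lambda>y. if y = x0 then L else \<psi> (dist y x0)) \<and>
               (\<forall>x \<in> ball x0 R.
                  Pk_minus k (hess (\<lambda>y. if y = x0 then L else \<psi> (dist y x0)) x)
                    - h * norm (grad (\<lambda>y. if y = x0 then L else \<psi> (dist y x0)) x)
                  \<ge> \<xi> (dist x x0) / (1 + hs * R)))"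
  proof
    assume xc: "continuous_on {0..} \<xi>"
    interpret S: setting2 k R h hs \<xi> \<psi> \<psi>' \<psi>'' 
      by unfold_locales (use k R hs xi_mono xi_nonneg psi_d1 psi_d2 psi_C2 ode lim0 xc in auto)
    show "\<exists>L. (\<psi> \<longlongrightarrow> L) (at_right 0) \<and>
               C2_on (ball x0 R) (\<lambda>y. if y = x0 then L else \<psi> (dist y x0)) \<and>
               (\<forall>x \<in> ball x0 R.
                  Pk_minus k (hess (\<lambda>y. if y = x0 then L else \<psi> (dist y x0)) x)
                    - h * norm (grad (\<lambda>y. if y = x0 then L else \<psi> (dist y x0)) x)
                  \<ge> \<xi> (dist x x0) / (1 + hs * R))"
    proof (intro exI[of _ S.L] conjI ballI)
      show "(\<psi> \<longlongrightarrow> S.L) (at_right 0)" by (rule S.psi_lim)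
      show "C2_on (ball x0 R) (\<lambda>y. if y = x0 then S.L else \<psi> (dist y x0))"
        by (rule S.W_C2[OF refl])
      fix x assume x: "x \<in> ball x0 R"
      show "Pk_minus k (hess (\<lambda>y. if y = x0 then S.L else \<psi> (dist y x0)) x)
              - h * norm (grad (\<lambda>y. if y = x0 then S.L else \<psi> (dist y x0)) x)
            \<ge> \<xi> (dist x x0) / (1 + hs * R)"
      proof (cases "x = x0")
        case False
        then show ?thesis
          using x by (intro part1_point[OF k R h hs hR hs_ge xi_mono xi_nonneg psi_d1 psi_d2 ode lim0]) auto
      next
        case True
        define e :: "real^'n" where "e = axis undefined 1"
        have e1: "norm e = 1" by (simp add: e_def)
        have H: "hess (\<lambda>y. if y = x0 then S.L else \<psi> (dist y x0)) x0
            = (\<chi> i j. S.c * (if i = j then 1 else 0) + (S.c - S.c) * e$i * e$j)"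
          using S.W_hess0[OF refl] by simp
        have "Pk_minus k (hess (\<lambda>y. if y = x0 then S.L else \<psi> (dist y x0)) x0)
            \<ge> min (S.c + real (k - 1) * S.c) (real k * S.c)"
          unfolding H by (rule Pk_rank1[OF e1 k])
        moreover have "real k * S.c = \<xi> 0" using k by (simp add: S.c_def)
        moreover have "S.c + real (k - 1) * S.c = real k * S.c" using k by (simp add: of_nat_diff algebra_simps)
        moreover have "\<xi> 0 / (1 + hs * R) \<le> \<xi> 0"
        proof -
          have "0 < 1 + hs * R" using hs R by (simp add: add_pos_nonneg)
          then show ?thesis using divide_left_mono[of 1 "1 + hs * R" "\<xi> 0"] S.xi0_nonneg hs R by simp
        qed
        moreover have "grad (\<lambda>y. if y = x0 then S.L else \<psi> (dist y x0)) x0 = 0"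
          by (rule S.W_grad0) simp
        ultimately show ?thesis using True by simp
      qed
    qed
  qed
  show ?thesis using P1 P2 by blast
qed

end
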